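(* There exists a probabilistic database that has the finite moments property but is not in $\mathsf{FO}(\mathsf{TI})$.
   Context: Fix a countably infinite universe $U$. A database schema $\tau$ is a finite nonempty set of relation symbols with arities; a $\tau$-fact is an expression $R(u_1,\dots,u_{\mathrm{ar}(R)})$ with $R\in\tau$, $u_i\in U$; a $\tau$-instance is a finite set of $\tau$-facts, and $\mathrm{adom}(D)$ is the set of elements of $U$occurring in $D$. A probabilistic database (PDB) of schema $\tau$ is a discrete probability space $(\mathbb{D},P)$ where $\mathbb{D}$ is a nonempty countable set of $\tau$-instances. The instance size is the random variable $D\mapsto |D|$ (number of facts). A PDB has the finite moments property if $\mathbb{E}(|\cdot|^k)=\sum_{D\in\mathbb{D}}|D|^kP(\{D\})<\infty$ for all $k\in\mathbb{N}_+$. A PDB $\mathcal{I}$ is tuple-independent (TI) if for all $k$ and all pairwise distinct facts $f_1,\dots,f_k$, $\Pr_{I\sim\mathcal I}(f_1\in I,\dots,f_k\in I)=\prod_i\Pr_{I\sim\mathcal I}(f_i\in I)$; $\mathsf{TI}$ is the class of all TI-PDBs. A view $V$ maps instances of an input schema to instances of an output schema; the image of a PDB $(\mathbb D,P)$ under $V$ is the PDB on $V(\mathbb D)$ with $P'(\{D'\})=P(\{D\in\mathbb D: V(D)=D'\})$. An FO-view consists of one first-order formula $\Phi_R(x_1,\dots,x_{\mathrm{ar}(R)})$ (constants from $U$ allowed) per output relation symbol $R$, evaluated under active domain semantics: quantifiers range over $\mathrm{adom}(D)$ together with the constants of the formula, and the output contains $R(\bar a)$ exactly for the tuples $\bar a$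 over this set with $D\models\Phi_R[\bar a]$. $\mathsf{FO}(\mathsf{TI})$ is the class of images of TI-PDBs under FO-views. *)

theory Defs
  imports "HOL-Probability.Probability"
begin

text \<open>Universe U: the natural numbers (a fixed countably infinite set).
  Relation symbols are named by natural numbers; a schema maps each of its
  (finitely many, at least one) relation symbols to its arity.\<close>

type_synonym schema = "nat \<rightharpoonup> nat"
type_synonym fact = "nat \<times> nat list"  (* R(u_1,...,u_k) as (R, [u_1,...,u_k]) *)
type_synonym db_instance = "fact set"

definition schema :: "schema \<Rightarrow> bool" where
  "schema \<tau> \<longleftrightarrow> finite (dom \<tau>) \<and> dom \<tau> \<noteq> {}"

definition is_fact :: "schema \<Rightarrow> fact \<Rightarrow> bool" where
  "is_fact \<tau> f \<longleftrightarrow> \<tau> (fst f) = Some (length (snd f))"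

definition is_instance :: "schema \<Rightarrow> db_instance \<Rightarrow> bool" where
  "is_instance \<tau> D \<longleftrightarrow> finite D \<and> (\<forall>f\<in>D. is_fact \<tau> f)"

definition adom :: "db_instance \<Rightarrow> nat set" where
  "adom D = (\<Union>f\<in>D. set (snd f))"

definition pdb :: "schema \<Rightarrow> db_instance pmf \<Rightarrow> bool" where
  "pdb \<tau> P \<longleftrightarrow> schema \<tau> \<and> (\<forall>D\<in>set_pmf P. is_instance \<tau> D)"

definition finite_moments :: "db_instance pmf \<Rightarrow> bool" where
  "finite_moments P \<longleftrightarrow>
     (\<forall>k::nat. k \<ge> 1 \<longrightarrow> (\<integral>\<^sup>+ D. ennreal (real (card D) ^ k) \<partial>measure_pmf P) < \<infinity>)"

text \<open>Tuple independence (finite sets of facts = pairwise distinct facts f_1..f_k).\<close>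
definition tuple_independent :: "db_instance pmf \<Rightarrow> bool" where
  "tuple_independent P \<longleftrightarrow>
     (\<forall>F::fact set. finite F \<longrightarrow>
        measure_pmf.prob P {I. F \<subseteq> I} = (\<Prod>f\<in>F. measure_pmf.prob P {I. f \<in> I}))"

definition TI :: "schema \<Rightarrow> db_instance pmf \<Rightarrow> bool" where
  "TI \<tau> P \<longleftrightarrow> pdb \<tau> P \<and> tuple_independent P"

datatype fo_term = FVar nat | FConst nat

datatype fo =
    FAtom nat "fo_term list"
  | FEq fo_term fo_term
  | FNeg fo
  | FAnd fo fo
  | FOr fo fo
  | FEx nat fo
  | FAll nat fo

fun tval :: "(nat \<Rightarrow> nat) \<Rightarrow> fo_term \<Rightarrow> nat" where
  "tval \<sigma> (FVar i) = \<sigma> i"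
| "tval \<sigma> (FConst c) = c"

fun tconsts :: "fo_term \<Rightarrow> nat set" where
  "tconsts (FVar i) = {}"
| "tconsts (FConst c) = {c}"

fun tvars :: "fo_term \<Rightarrow> nat set" where
  "tvars (FVar i) = {i}"
| "tvars (FConst c) = {}"

fun fo_consts :: "fo \<Rightarrow> nat set" where
  "fo_consts (FAtom R ts) = (\<Union>t\<in>set ts. tconsts t)"
| "fo_consts (FEq s t) = tconsts s \<union> tconsts t"
| "fo_consts (FNeg \<phi>) = fo_consts \<phi>"
| "fo_consts (FAnd \<phi> \<psi>) = fo_consts \<phi> \<union> fo_consts \<psi>"
| "fo_consts (FOr \<phi> \<psi>) = fo_consts \<phi> \<union> fo_consts \<psi>"
| "fo_consts (FEx x \<phi>) = fo_consts \<phi>"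
| "fo_consts (FAll x \<phi>) = fo_consts \<phi>"

fun fv :: "fo \<Rightarrow> nat set" where
  "fv (FAtom R ts) = (\<Union>t\<in>set ts. tvars t)"
| "fv (FEq s t) = tvars s \<union> tvars t"
| "fv (FNeg \<phi>) = fv \<phi>"
| "fv (FAnd \<phi> \<psi>) = fv \<phi> \<union> fv \<psi>"
| "fv (FOr \<phi> \<psi>) = fv \<phi> \<union> fv \<psi>"
| "fv (FEx x \<phi>) = fv \<phi> - {x}"
| "fv (FAll x \<phi>) = fv \<phi> - {x}"

fun wf_fo :: "schema \<Rightarrow> fo \<Rightarrow> bool" where
  "wf_fo \<tau> (FAtom R ts) = (\<tau> R = Some (length ts))"
| "wf_fo \<tau> (FEq s t) = True"
| "wf_fo \<tau> (FNeg \<phi>) = wf_fo \<tau> \<phi>"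
| "wf_fo \<tau> (FAnd \<phi> \<psi>) = (wf_fo \<tau> \<phi> \<and> wf_fo \<tau> \<psi>)"
| "wf_fo \<tau> (FOr \<phi> \<psi>) = (wf_fo \<tau> \<phi> \<and> wf_fo \<tau> \<psi>)"
| "wf_fo \<tau> (FEx x \<phi>) = wf_fo \<tau> \<phi>"
| "wf_fo \<tau> (FAll x \<phi>) = wf_fo \<tau> \<phi>"

fun sat :: "db_instance \<Rightarrow> nat set \<Rightarrow> (nat \<Rightarrow> nat) \<Rightarrow> fo \<Rightarrow> bool" where
  "sat D A \<sigma> (FAtom R ts) = ((R, map (tval \<sigma>) ts) \<in> D)"
| "sat D A \<sigma> (FEq s t) = (tval \<sigma> s = tval \<sigma> t)"
| "sat D A \<sigma> (FNeg \<phi>) = (\<not> sat D A \<sigma> \<phi>)"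
| "sat D A \<sigma> (FAnd \<phi> \<psi>) = (sat D A \<sigma> \<phi> \<and> sat D A \<sigma> \<psi>)"
| "sat D A \<sigma> (FOr \<phi> \<psi>) = (sat D A \<sigma> \<phi> \<or> sat D A \<sigma> \<psi>)"
| "sat D A \<sigma> (FEx x \<phi>) = (\<exists>a\<in>A. sat D A (\<sigma>(x := a)) \<phi>)"
| "sat D A \<sigma> (FAll x \<phi>) = (\<forall>a\<in>A. sat D A (\<sigma>(x := a)) \<phi>)"

text \<open>An FO-view from tau to tau': one formula Phi R per output symbol R, with
  free variables among x_1..x_ar(R) (represented as variables 0..ar(R)-1).\<close>
definition fo_view :: "schema \<Rightarrow> schema \<Rightarrow> (nat \<Rightarrow> fo) \<Rightarrow> bool" where
  "fo_view \<tau> \<tau>' \<Phi> \<longleftrightarrow> schema \<tau> \<and> schema \<tau>' \<and>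
     (\<forall>R k. \<tau>' R = Some k \<longrightarrow> wf_fo \<tau> (\<Phi> R) \<and> fv (\<Phi> R) \<subseteq> {..<k})"

definition apply_view :: "schema \<Rightarrow> (nat \<Rightarrow> fo) \<Rightarrow> db_instance \<Rightarrow> db_instance" where
  "apply_view \<tau>' \<Phi> D =
     {(R, as) | R as. \<tau>' R = Some (length as) \<and>
        set as \<subseteq> adom D \<union> fo_consts (\<Phi> R) \<and>
        sat D (adom D \<union> fo_consts (\<Phi> R)) (\<lambda>i. as ! i) (\<Phi> R)}"

definition in_FO_TI :: "schema \<Rightarrow> db_instance pmf \<Rightarrow> bool" where
  "in_FO_TI \<tau>' P' \<longleftrightarrow>
     (\<exists>\<tau> P \<Phi>. TI \<tau> P \<and> fo_view \<tau> \<tau>' \<Phi> \<and> P' = map_pmf (apply_view \<tau>' \<Phi>) P)"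

end

theory Submission
  imports Defs "HOL-Library.Discrete_Functions" "HOL-Real_Asymp.Real_Asymp"
begin


locale tip =
  fixes P :: "db_instance pmf"
  assumes ti: "tuple_independent P"
    and fin: "\<And>D. D \<in> set_pmf P \<Longrightarrow> finite D"
begin

definition p :: "fact \<Rightarrow> real" where "p f = measure_pmf.prob P {I. f \<in> I}"

lemma p_nonneg: "0 \<le> p f" and p_le1: "p f \<le> 1"
  by (auto simp: p_def)

lemma prob_sub: "finite F \<Longrightarrow> measure_pmf.prob P {I. F \<subseteq> I} = (\<Prod>f\<in>F. p f)"
  using ti unfolding tuple_independent_def p_def by blast

lemma L1:
  assumes "finite G"
  shows "finite H \<Longrightarrow> H \<inter> G = {} \<Longrightarrow>
    measure_pmf.prob P {I. H \<subseteq> I \<and> I \<inter> G = {}} = (\<Prod>f\<in>H. p f) * (\<Prod>f\<in>G. 1 - p f)"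
  using assms
proof (induction G arbitrary: H rule: finite_induct)
  case empty
  then show ?case using prob_sub[of H] by simp
next
  case (insert g G)
  have eq: "{I. H \<subseteq> I \<and> I \<inter> insert g G = {}} =
     {I. H \<subseteq> I \<and> I \<inter> G = {}} - {I. insert g H \<subseteq> I \<and> I \<inter> G = {}}"
    by auto
  have "measure_pmf.prob P {I. H \<subseteq> I \<and> I \<inter> insert g G = {}} =
     measure_pmf.prob P {I. H \<subseteq> I \<and> I \<inter> G = {}} - measure_pmf.prob P {I. insert g H \<subseteq> I \<and> I \<inter> G = {}}"
    unfolding eq by (rule measure_pmf.finite_measure_Diff) auto
  also have "\<dots> = (\<Prod>f\<in>H. p f) * (\<Prod>f\<in>G. 1 - p f) - (\<Prod>f\<in>insert g H. p f) * (\<Prod>f\<in>G. 1 - p f)"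
  proof -
    have h1: "H \<inter> G = {}" "g \<notin> H" using insert.prems by auto
    have "insert g H \<inter> G = {}" "finite (insert g H)" using insert h1 by auto
    then show ?thesis using insert.IH[OF insert.prems(1) h1(1)] insert.IH[of "insert g H"] by simp
  qed
  also have "\<dots> = (\<Prod>f\<in>H. p f) * (\<Prod>f\<in>insert g G. 1 - p f)"
    using insert by (simp add: algebra_simps)
  finally show ?case .
qed

definition Ai :: "nat \<Rightarrow> fact set" where "Ai i = {f. to_nat f < i}"

lemma Ai_finite: "finite (Ai i)"
proof -
  have "Ai i = to_nat -` {..<i}" by (auto simp: Ai_def)
  then show ?thesis by (metis finite_lessThan finite_vimageI inj_to_nat)
qed

lemma Ai_mono: "i \<le> j \<Longrightarrow> Ai i \<subseteq> Ai j" by (auto simp: Ai_def)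

lemma Ai_cover: "finite D \<Longrightarrow> \<exists>i. D \<subseteq> Ai i"
proof -
  assume "finite D"
  then have "\<forall>f\<in>D. to_nat f < Suc (Max (to_nat ` D))"
    by (simp add: le_imp_less_Suc)
  then show ?thesis by (auto simp: Ai_def)
qed

lemma L2: "\<exists>Bd. \<forall>A. finite A \<longrightarrow> sum p A \<le> Bd"
proof -
  define E where "E i = {I. I \<subseteq> Ai i}" for i
  have inc: "incseq E" unfolding E_def incseq_def using Ai_mono by blast
  have "set_pmf P \<subseteq> (\<Union>i. E i)" using fin Ai_cover unfolding E_def by blast
  then have "measure_pmf.prob P (\<Union>i. E i) = measure_pmf.prob P UNIV"
    by (metis Int_absorb1 Int_commute inf_top.left_neutral measure_Int_set_pmf)
  then have one: "measure_pmf.prob P (\<Union>i. E i) = 1" by simp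
  have "(\<lambda>i. measure_pmf.prob P (E i)) \<longlonglongrightarrow> 1"
    using measure_pmf.finite_Lim_measure_incseq[OF _ inc, where M=P] one by simp
  then have "eventually (\<lambda>i. 1/2 < measure_pmf.prob P (E i)) sequentially"
    by (rule order_tendstoD) simp
  then obtain i0 where i0: "1/2 < measure_pmf.prob P (E i0)"
    by (meson eventually_sequentially order_refl)
  have small: "sum p G < 1" if G: "finite G" "G \<inter> Ai i0 = {}" for G
  proof (rule ccontr)
    assume "\<not> sum p G < 1"
    then have ge: "sum p G \<ge> 1" by simp
    have "measure_pmf.prob P {I. {} \<subseteq> I \<and> I \<inter> G = {}} = (\<Prod>f\<in>G. 1 - p f)"
      using L1[OF G(1), of "{}"] by simp
    also have "\<dots> \<le> (\<Prod>f\<in>G. exp (- p f))"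
      by (intro prod_mono) (auto simp: p_le1 exp_ge_add_one_self[of "- p _", simplified])
    also have "\<dots> = exp (- sum p G)" by (simp add: exp_sum[OF G(1), symmetric] sum_negf)
    also have "\<dots> \<le> exp (-1)" using ge by simp
    also have "\<dots> \<le> 1/2"
    proof -
      have "2 \<le> exp (1::real)" using exp_ge_add_one_self[of 1] by simp
      then show ?thesis by (simp add: exp_minus field_simps)
    qed
    finally have a: "measure_pmf.prob P {I. I \<inter> G = {}} \<le> 1/2" by simp
    have "E i0 \<subseteq> {I. I \<inter> G = {}}" using G(2) unfolding E_def by blast
    then have "measure_pmf.prob P (E i0) \<le> measure_pmf.prob P {I. I \<inter> G = {}}"
      by (rule measure_pmf.finite_measure_mono) simp
    then show False using a i0 by simp
  qed
  show ?thesis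
  proof (intro exI allI impI)
    fix A :: "fact set" assume A: "finite A"
    have "sum p A = sum p (A \<inter> Ai i0) + sum p (A - Ai i0)"
      using A by (metis Diff_Int2 Int_Diff_Un Int_commute sum.union_inter_neutral finite_Int
          finite_Diff inf.idem inf_sup_aci(1) sum.Int_Diff)
    also have "\<dots> \<le> sum p (Ai i0) + 1"
    proof (rule add_mono)
      show "sum p (A \<inter> Ai i0) \<le> sum p (Ai i0)"
        by (rule sum_mono2) (auto simp: Ai_finite p_nonneg)
      show "sum p (A - Ai i0) \<le> 1" using small[of "A - Ai i0"] A by fastforce
    qed
    finally show "sum p A \<le> sum p (Ai i0) + 1" .
  qed
qed

lemma pow_sum: "finite A \<Longrightarrow> ennreal (2 ^ card (D \<inter> A)) = (\<Sum>F\<in>Pow A. indicator {I. F \<subseteq> I} D)"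
proof -
  assume A: "finite A"
  have "(\<Sum>F\<in>Pow A. indicator {I. F \<subseteq> I} D :: ennreal) = (\<Sum>F\<in>Pow A. if F \<subseteq> D then 1 else 0)"
    by (intro sum.cong) (auto simp: indicator_def)
  also have "\<dots> = (\<Sum>F\<in>{F\<in>Pow A. F \<subseteq> D}. 1)"
    using A by (simp only: sum.inter_filter[symmetric] finite_Pow_iff)
  also have "{F\<in>Pow A. F \<subseteq> D} = Pow (D \<inter> A)" by auto
  also have "(\<Sum>F\<in>Pow (D \<inter> A). 1 :: ennreal) = of_nat (card (Pow (D \<inter> A)))" by simp
  also have "\<dots> = ennreal (2 ^ card (D \<inter> A))"
  proof -
    have "card (Pow (D \<inter> A)) = 2 ^ card (D \<inter> A)" using A by (metis Pow_Int_eq card_Pow finite_Int)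
    then show ?thesis by (metis ennreal_of_nat_eq_real_of_nat of_nat_numeral of_nat_power)
  qed
  finally show ?thesis by simp
qed

lemma L3:
  assumes A: "finite A"
  shows "(\<integral>\<^sup>+ D. ennreal (2 ^ card (D \<inter> A)) \<partial>measure_pmf P) \<le> ennreal (exp (sum p A))"
proof -
  have "(\<integral>\<^sup>+ D. ennreal (2 ^ card (D \<inter> A)) \<partial>measure_pmf P)
      = (\<integral>\<^sup>+ D. (\<Sum>F\<in>Pow A. indicator {I. F \<subseteq> I} D) \<partial>measure_pmf P)"
    using A by (simp add: pow_sum)
  also have "\<dots> = (\<Sum>F\<in>Pow A. \<integral>\<^sup>+ D. indicator {I. F \<subseteq> I} D \<partial>measure_pmf P)"
    by (rule nn_integral_sum) simp
  also have "\<dots> = (\<Sum>F\<in>Pow A. ennreal (\<Prod>f\<in>F. p f))"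
  proof (rule sum.cong)
    fix F assume "F \<in> Pow A"
    then have "finite F" using A finite_subset by auto
    then show "(\<integral>\<^sup>+ D. indicator {I. F \<subseteq> I} D \<partial>measure_pmf P) = ennreal (\<Prod>f\<in>F. p f)"
      by (simp add: measure_pmf.emeasure_eq_measure prob_sub)
  qed simp
  also have "\<dots> = ennreal (\<Sum>F\<in>Pow A. \<Prod>f\<in>F. p f)"
    by (rule sum_ennreal) (simp add: prod_nonneg p_nonneg)
  also have "(\<Sum>F\<in>Pow A. \<Prod>f\<in>F. p f) = (\<Prod>f\<in>A. p f + 1)"
    using prod_add[OF A, of p "\<lambda>_. 1"] by simp
  also have "\<dots> \<le> (\<Prod>f\<in>A. exp (p f))"
    by (intro prod_mono) (auto simp: p_nonneg add.commute[of _ 1] exp_ge_add_one_self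
        intro: add_nonneg_nonneg)
  also have "\<dots> = exp (sum p A)" by (simp add: exp_sum[OF A])
  finally show ?thesis by (simp add: ennreal_leI)
qed

lemma TI_exp: "(\<integral>\<^sup>+ D. ennreal (2 ^ card D) \<partial>measure_pmf P) < \<infinity>"
proof -
  obtain Bd where Bd: "\<And>A. finite A \<Longrightarrow> sum p A \<le> Bd" using L2 by blast
  define f where "f i D = ennreal (2 ^ card (D \<inter> Ai i))" for i D
  have inc: "incseq f"
  proof (rule incseq_SucI, rule le_funI)
    fix i D
    have "card (D \<inter> Ai i) \<le> card (D \<inter> Ai (Suc i))"
      by (rule card_mono) (use Ai_finite[of "Suc i"] in \<open>auto simp: Ai_def\<close>)
    then show "f i D \<le> f (Suc i) D" unfolding f_def
      by (intro ennreal_leI) simp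
  qed
  have "(\<integral>\<^sup>+ D. ennreal (2 ^ card D) \<partial>measure_pmf P) \<le> (\<integral>\<^sup>+ D. (SUP i. f i D) \<partial>measure_pmf P)"
  proof (rule nn_integral_mono_AE, unfold AE_measure_pmf_iff, intro ballI)
    fix D assume "D \<in> set_pmf P"
    then obtain i where "D \<subseteq> Ai i" using Ai_cover fin by blast
    then have "ennreal (2 ^ card D) = f i D" unfolding f_def by (simp add: Int_absorb2)
    also have "\<dots> \<le> (SUP i. f i D)" by (rule SUP_upper) simp
    finally show "ennreal (2 ^ card D) \<le> (SUP i. f i D)" .
  qed
  also have "\<dots> = (SUP i. \<integral>\<^sup>+ D. f i D \<partial>measure_pmf P)"
    by (rule nn_integral_monotone_convergence_SUP[OF inc]) simp
  also have "\<dots> \<le> ennreal (exp Bd)"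
  proof (rule SUP_least)
    fix i
    have "(\<integral>\<^sup>+ D. f i D \<partial>measure_pmf P) \<le> ennreal (exp (sum p (Ai i)))"
      unfolding f_def by (rule L3[OF Ai_finite])
    also have "\<dots> \<le> ennreal (exp Bd)" using Bd[OF Ai_finite] by (simp add: ennreal_leI)
    finally show "(\<integral>\<^sup>+ D. f i D \<partial>measure_pmf P) \<le> ennreal (exp Bd)" .
  qed
  finally show ?thesis using order.strict_trans1 by fastforce
qed

end


lemma finite_tconsts: "finite (tconsts t)" by (cases t) auto

lemma finite_fo_consts: "finite (fo_consts \<phi>)"
  by (induction \<phi>) (auto simp: finite_tconsts)

lemma schema_bound: "schema \<tau> \<Longrightarrow> \<exists>a. \<forall>R k. \<tau> R = Some k \<longrightarrow> k \<le> a"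
proof -
  assume "schema \<tau>"
  then have "finite (ran \<tau>)" by (simp add: schema_def finite_ran)
  then show ?thesis by (meson Max_ge ranI)
qed

lemma arith_bound:
  fixes c y d km x :: nat
  assumes "x + 1 \<le> y * (d + 1)"
  shows "c * ((km + 1) * (x + 1) ^ km) \<le> ((c * (km+1) + 1) * y * (d + 1)) ^ (km + 1)"
proof -
  define z where "z = y * (d + 1)"
  define W where "W = (c * (km+1) + 1) * y * (d + 1)"
  have "1*(y*(d+1)) \<le> (c*(km+1)+1)*(y*(d+1))" by (rule mult_le_mono1) simp
  then have zW: "z \<le> W" unfolding z_def W_def by (metis mult.assoc mult_1)
  have "1 \<le> z" using assms unfolding z_def by simp
  then have cW: "c * (km+1) + 1 \<le> W" unfolding W_def z_def
    by (metis mult.assoc mult_le_mono2 nat_mult_1_right)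
  have "c * ((km + 1) * (x + 1) ^ km) = (c * (km+1)) * (x + 1) ^ km" by (simp only: mult.assoc)
  also have "\<dots> \<le> W * z ^ km"
  proof (rule mult_le_mono)
    show "c * (km + 1) \<le> W" using cW by simp
    show "(x + 1) ^ km \<le> z ^ km" by (rule power_mono) (use assms in \<open>simp_all add: z_def\<close>)
  qed
  also have "\<dots> \<le> W * W ^ km" by (intro mult_le_mono2 power_mono zW) simp
  finally show ?thesis unfolding W_def by simp
qed

lemma view_bound:
  assumes V: "fo_view \<tau> \<tau>' \<Phi>"
  shows "\<exists>B K. B \<ge> 1 \<and> (\<forall>D. is_instance \<tau> D \<longrightarrow> card (apply_view \<tau>' \<Phi> D) \<le> (B * (card D + 1)) ^ K)"
proof -
  have s: "schema \<tau>" "schema \<tau>'" using V by (auto simp: fo_view_def)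
  obtain am where am: "\<And>R k. \<tau> R = Some k \<Longrightarrow> k \<le> am" using schema_bound[OF s(1)] by blast
  obtain km where km: "\<And>R k. \<tau>' R = Some k \<Longrightarrow> k \<le> km" using schema_bound[OF s(2)] by blast
  define Cs where "Cs = (\<Union>R\<in>dom \<tau>'. fo_consts (\<Phi> R))"
  have fdom: "finite (dom \<tau>')" using s(2) by (simp add: schema_def)
  have fCs: "finite Cs" unfolding Cs_def using fdom by (simp add: finite_fo_consts)
  define c where "c = card (dom \<tau>')"
  define y where "y = am + card Cs + 1"
  show ?thesis
  proof (intro exI conjI allI impI)
    show "1 \<le> (c * (km+1) + 1) * y" unfolding y_def by simp
    fix D assume D: "is_instance \<tau> D"
    have fD: "finite D" using D by (simp add: is_instance_def)
    define d where "d = card D"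
    have fad: "finite (adom D)" unfolding adom_def using fD by simp
    have "card (adom D) \<le> (\<Sum>f\<in>D. card (set (snd f)))"
      unfolding adom_def by (rule card_UN_le[OF fD])
    also have "\<dots> \<le> (\<Sum>f\<in>D. am)"
    proof (rule sum_mono)
      fix f assume "f \<in> D"
      then have "\<tau> (fst f) = Some (length (snd f))" using D by (simp add: is_instance_def is_fact_def)
      then have "length (snd f) \<le> am" using am by blast
      then show "card (set (snd f)) \<le> am" using card_length le_trans by blast
    qed
    also have "\<dots> = am * d" unfolding d_def by simp
    finally have cad: "card (adom D) \<le> am * d" .
    define X where "X = adom D \<union> Cs"
    have fX: "finite X" unfolding X_def using fad fCs by simp
    have cX: "card X \<le> am * d + card Cs" unfolding X_def
      using card_Un_le[of "adom D" Cs] cad by linarith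
    have xy: "card X + 1 \<le> y * (d + 1)" unfolding y_def using cX
      by (simp add: algebra_simps)
    have sub: "apply_view \<tau>' \<Phi> D \<subseteq> dom \<tau>' \<times> {as. set as \<subseteq> X \<and> length as \<le> km}"
      unfolding apply_view_def X_def Cs_def using km by fastforce
    have "card (apply_view \<tau>' \<Phi> D) \<le> card (dom \<tau>' \<times> {as. set as \<subseteq> X \<and> length as \<le> km})"
      by (rule card_mono[OF _ sub]) (simp add: fdom fX finite_lists_length_le)
    also have "\<dots> = c * (\<Sum>i\<le>km. card X ^ i)"
      unfolding c_def by (simp add: card_cartesian_product card_lists_length_le[OF fX])
    also have "\<dots> \<le> c * ((km + 1) * (card X + 1) ^ km)"
    proof -
      have "(\<Sum>i\<le>km. card X ^ i) \<le> (\<Sum>i\<le>km. (card X + 1) ^ km)"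
        by (intro sum_mono) (metis le_add1 le_add2 le_trans power_increasing power_mono
            atMost_iff not_one_le_zero le_add_same_cancel2)
      then show ?thesis by simp
    qed
    also have "\<dots> \<le> ((c * (km+1) + 1) * y * (d + 1)) ^ (km + 1)"
      by (rule arith_bound[OF xy])
    finally show "card (apply_view \<tau>' \<Phi> D) \<le> ((c * (km+1) + 1) * y * (card D + 1)) ^ (km + 1)"
      unfolding d_def .
  qed
qed


lemma ev_poly_exp: "(B::nat) > 0 \<Longrightarrow> eventually (\<lambda>j::nat. (real B * (real j^2+1))^K < 2^j) at_top"
  by real_asymp

lemma ev_poly_exp_nat: "(B::nat) > 0 \<Longrightarrow> \<exists>j0. \<forall>j\<ge>j0. (B * (j^2+1))^K < 2^j"
proof -
  assume "B > 0"
  from ev_poly_exp[OF this, of K] obtain j0 where "\<forall>j\<ge>j0. (real B * (real j^2+1))^K < 2^j"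
    by (auto simp: eventually_at_top_linorder)
  then have "\<forall>j\<ge>j0. real ((B * (j^2+1))^K) < real (2^j)" by (auto simp: algebra_simps)
  then show ?thesis by (meson of_nat_less_iff)
qed

definition N :: "nat \<Rightarrow> nat" where "N n = 2 ^ floor_sqrt n"
definition inst :: "nat \<Rightarrow> db_instance" where "inst n = (\<lambda>i. (0::nat, [i])) ` {..< N n}"
definition tau0 :: schema where "tau0 = Map.empty(0 \<mapsto> 1)"
definition geo :: "nat pmf" where "geo = geometric_pmf (1/2)"
definition P0 :: "db_instance pmf" where "P0 = map_pmf inst geo"

lemma pmf_geo: "pmf geo n = (1/2)^n * (1/2)"
  unfolding geo_def by (subst pmf_geometric) auto

lemma card_inst: "card (inst n) = N n"
  unfolding inst_def by (subst card_image) (auto simp: inj_on_def)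

lemma pdb0: "pdb tau0 P0"
  unfolding pdb_def schema_def tau0_def P0_def
  by (auto simp: is_instance_def is_fact_def inst_def)

lemma int_P0: "(\<integral>\<^sup>+ D. f D \<partial>measure_pmf P0) = (\<Sum>n. ennreal ((1/2)^n * (1/2)) * f (inst n))"
  unfolding P0_def apply (subst nn_integral_map_pmf)
  by (simp add: nn_integral_measure_pmf nn_integral_count_space_nat pmf_geo)

lemma summ: "summable (\<lambda>n. (1/2::real)^n * (1/2) * real (N n) ^ k)"
proof (rule summable_comparison_test')
  show "summable (\<lambda>n. sqrt 2 ^ (k^2) * (sqrt 2 / 2) ^ n)"
    by (intro summable_mult summable_geometric) (simp add: real_sqrt_less_iff[of 2 4, simplified])
  fix n :: nat
  define s where "s = floor_sqrt n"
  have "2 * (k * s) \<le> k^2 + s^2"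
  proof -
    have "(int k - int s)^2 \<ge> 0" by simp
    then have "2 * int k * int s \<le> int k ^ 2 + int s ^ 2" by (simp add: power2_eq_square algebra_simps)
    then show ?thesis by (simp add: mult.assoc) (metis of_nat_le_iff of_nat_add of_nat_mult of_nat_power of_nat_numeral)
  qed
  also have "\<dots> \<le> k^2 + n" unfolding s_def by simp
  finally have ks: "2 * (k * s) \<le> k^2 + n" .
  have "real (N n) ^ k = 2 ^ (k * s)" unfolding N_def s_def by (simp add: power_mult[symmetric] mult.commute)
  also have "\<dots> = sqrt 2 ^ (2 * (k * s))" by (simp add: power_mult)
  also have "\<dots> \<le> sqrt 2 ^ (k^2 + n)" by (rule power_increasing[OF ks]) simp
  finally have b: "real (N n) ^ k \<le> sqrt 2 ^ (k^2) * sqrt 2 ^ n" by (simp add: power_add)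
  have "(1/2::real)^n * (1/2) * real (N n) ^ k \<le> (1/2)^n * real (N n) ^ k"
    by simp
  also have "\<dots> \<le> (1/2)^n * (sqrt 2 ^ (k^2) * sqrt 2 ^ n)"
    using b by (intro mult_left_mono) auto
  also have "\<dots> = sqrt 2 ^ (k^2) * (sqrt 2 / 2) ^ n" by (simp add: power_divide)
  finally show "norm ((1/2::real)^n * (1/2) * real (N n) ^ k) \<le> sqrt 2 ^ (k^2) * (sqrt 2 / 2) ^ n"
    by simp
qed

lemma fm0: "finite_moments P0"
  unfolding finite_moments_def
proof (intro allI impI)
  fix k :: nat
  have "(\<integral>\<^sup>+ D. ennreal (real (card D) ^ k) \<partial>measure_pmf P0)
      = (\<Sum>n. ennreal ((1/2)^n * (1/2) * real (N n) ^ k))"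
  proof -
    have "\<And>n. ennreal ((1/2)^n*(1/2)) * ennreal (real (N n)^k) = ennreal ((1/2)^n*(1/2)*real (N n)^k)"
      by (rule ennreal_mult[symmetric]) auto
    then show ?thesis by (simp only: int_P0 card_inst)
  qed
  also have "\<dots> = ennreal (\<Sum>n. (1/2)^n * (1/2) * real (N n) ^ k)"
    by (rule suminf_ennreal2[OF _ summ]) simp
  finally show "(\<integral>\<^sup>+ D. ennreal (real (card D) ^ k) \<partial>measure_pmf P0) < \<infinity>" by simp
qed


lemma notFO: "\<not> in_FO_TI tau0 P0"
proof
  assume "in_FO_TI tau0 P0"
  then obtain \<tau> P \<Phi> where TIP: "TI \<tau> P" and V: "fo_view \<tau> tau0 \<Phi>"
    and eq: "P0 = map_pmf (apply_view tau0 \<Phi>) P" unfolding in_FO_TI_def by blast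
  have insts: "\<And>D. D \<in> set_pmf P \<Longrightarrow> is_instance \<tau> D" using TIP by (auto simp: TI_def pdb_def)
  interpret tip P using TIP insts by unfold_locales (auto simp: TI_def is_instance_def)
  obtain B K0 where B1: "B \<ge> 1"
    and bd0: "\<forall>D. is_instance \<tau> D \<longrightarrow> card (apply_view tau0 \<Phi> D) \<le> (B*(card D+1))^K0"
    using view_bound[OF V] by blast
  define K where "K = K0 + 1"
  have bd: "card (apply_view tau0 \<Phi> D) \<le> (B*(card D+1))^K" if "is_instance \<tau> D" for D
  proof -
    have "card (apply_view tau0 \<Phi> D) \<le> (B*(card D+1))^K0" using bd0 that by blast
    also have "\<dots> \<le> (B*(card D+1))^K" unfolding K_def
      by (rule power_increasing) (use B1 in simp_all)
    finally show ?thesis .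
  qed
  define S where "S v = {m. (B*(m+1))^K < v}" for v
  have Sfin: "finite (S v)" for v
  proof -
    have "S v \<subseteq> {..<v}"
    proof
      fix m assume "m \<in> S v"
      then have a: "(B*(m+1))^K < v" by (simp add: S_def)
      have "m + 1 \<le> B*(m+1)" using mult_le_mono1[OF B1, of "m+1"] by simp
      also have "\<dots> \<le> (B*(m+1))^K" unfolding K_def
        using B1 by (simp add: Suc_le_eq)
      finally show "m \<in> {..<v}" using a by simp
    qed
    then show ?thesis using finite_subset by blast
  qed
  define g where "g (D' :: db_instance) = ennreal (2 ^ card (S (card D')))" for D'
  have gle: "g (apply_view tau0 \<Phi> D) \<le> ennreal (2 ^ card D)" if "D \<in> set_pmf P" for D
  proof -
    have "S (card (apply_view tau0 \<Phi> D)) \<subseteq> {..<card D}"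
    proof
      fix m assume m: "m \<in> S (card (apply_view tau0 \<Phi> D))"
      show "m \<in> {..<card D}"
      proof (rule ccontr)
        assume "m \<notin> {..<card D}"
        then have "card D + 1 \<le> m + 1" by simp
        then have "(B*(card D+1))^K \<le> (B*(m+1))^K" by (intro power_mono mult_le_mono2) auto
        with bd[OF insts[OF that]] m show False by (simp add: S_def)
      qed
    qed
    then have "card (S (card (apply_view tau0 \<Phi> D))) \<le> card D"
      using card_mono[of "{..<card D}"] by fastforce
    then show ?thesis unfolding g_def by (intro ennreal_leI) simp
  qed
  have "(\<integral>\<^sup>+ D. g D \<partial>measure_pmf P0) = (\<integral>\<^sup>+ D. g (apply_view tau0 \<Phi> D) \<partial>measure_pmf P)"
    unfolding eq by simp
  also have "\<dots> \<le> (\<integral>\<^sup>+ D. ennreal (2^card D) \<partial>measure_pmf P)"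
    by (rule nn_integral_mono_AE) (simp add: AE_measure_pmf_iff gle)
  also have "\<dots> < \<infinity>" by (rule TI_exp)
  finally have fin: "(\<integral>\<^sup>+ D. g D \<partial>measure_pmf P0) < \<infinity>" .
  define r where "r n = (1/2::real)^n*(1/2) * 2^card (S (N n))" for n
  have "\<And>n. ennreal ((1/2)^n*(1/2)) * g (inst n) = ennreal (r n)"
    unfolding g_def r_def card_inst by (rule ennreal_mult[symmetric]) auto
  then have "(\<integral>\<^sup>+ D. g D \<partial>measure_pmf P0) = (\<Sum>n. ennreal (r n))"
    by (simp only: int_P0)
  with fin have "(\<Sum>n. ennreal (r n)) \<noteq> top" by simp
  then have "summable r" by (rule summable_suminf_not_top[rotated]) (simp add: r_def)
  then have "r \<longlonglongrightarrow> 0" by (rule summable_LIMSEQ_zero)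
  then have "eventually (\<lambda>n. r n < 1) sequentially" by (rule order_tendstoD) simp
  then obtain n0 where n0: "\<forall>n\<ge>n0. r n < 1" by (auto simp: eventually_sequentially)
  obtain j0 where j0: "\<forall>j\<ge>j0. (B*(j^2+1))^K < 2^j" using ev_poly_exp_nat B1 by fastforce
  define j where "j = max j0 n0"
  define n where "n = j^2"
  have "j \<le> n" unfolding n_def by (simp add: power2_eq_square le_square)
  then have nn0: "n \<ge> n0" unfolding j_def by simp
  have Nn: "N n = 2^j" unfolding N_def n_def by simp
  have "{..n} \<subseteq> S (N n)"
  proof
    fix m assume "m \<in> {..n}"
    then have "(B*(m+1))^K \<le> (B*(n+1))^K" by (intro power_mono mult_le_mono2) auto
    also have "\<dots> < 2^j" using j0 unfolding j_def n_def by simp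
    finally show "m \<in> S (N n)" unfolding S_def Nn by simp
  qed
  then have "card {..n} \<le> card (S (N n))" by (rule card_mono[OF Sfin])
  then have "n + 1 \<le> card (S (N n))" by simp
  then have "(2::real)^(n+1) \<le> 2^card (S (N n))" by (rule power_increasing) simp
  then have "(1/2::real)^n*(1/2) * 2^(n+1) \<le> r n" unfolding r_def
    by (intro mult_left_mono) auto
  moreover have "(1/2::real)^n*(1/2) * 2^(n+1) = 1" by (simp add: power_one_over)
  ultimately show False using n0 nn0 by fastforce
qed

theorem theorem3p9:
  shows "\<exists>\<tau> P. pdb \<tau> P \<and> finite_moments P \<and> \<not> in_FO_TI \<tau> P"
  using pdb0 fm0 notFO by blast

end
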